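(* Let $\mathbb{F}$ be an infinite field with $\operatorname{char}(\mathbb{F})\neq 2$, let $G$ be a group with a group involution $\ast$ and a non-trivial orientation $\sigma$ such that $gg^\ast\in N=\ker\sigma$ for all $g\in G$, and let $\circledast$ be the associated oriented involution of $\mathbb{F}G$. Assume $\mathbb{F}G$ is normal with respect to $\circledast$, and let $g,h\in G$. (1) If $\sigma(g)\sigma(h)=1$, then either $gh=hg$ or $gh=g^\ast h^\ast$. (2) If $\sigma(g)\sigma(h)=-1$, then either $gh=hg$ or $gh=(gh)^\ast$.
   Context: A group involution on $G$ is a map $\ast:G\to G$ with $(gh)^\ast=h^\ast g^\ast$ and $(g^\ast)^\ast=g$. An orientation is a group homomorphism $\sigma:G\to\{\pm1\}$. The oriented involution is $\circledast:\mathbb{F}G\to\mathbb{F}G$, $(\sum_g\alpha_g g)^\circledast=\sum_g\alpha_g\sigma(g)g^\ast$; the condition $gg^\ast\in\ker\sigma$ for all $g$ ensures it is an algebra involution. $\mathbb{F}G$ is normal (with respect to $\circledast$) if $\alpha\alpha^\circledast=\alpha^\circledast\alpha$ for all $\alpha\in\mathbb{F}G$. *)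

theory Defs
  imports "HOL-Algebra.Group"
begin

definition group_involution :: "('g, 'b) monoid_scheme \<Rightarrow> ('g \<Rightarrow> 'g) \<Rightarrow> bool" where
  "group_involution G s \<longleftrightarrow>
     (\<forall>g\<in>carrier G. s g \<in> carrier G) \<and>
     (\<forall>g\<in>carrier G. \<forall>h\<in>carrier G. s (g \<otimes>\<^bsub>G\<^esub> h) = s h \<otimes>\<^bsub>G\<^esub> s g) \<and>
     (\<forall>g\<in>carrier G. s (s g) = g)"

definition orientation :: "('g, 'b) monoid_scheme \<Rightarrow> ('g \<Rightarrow> int) \<Rightarrow> bool" where
  "orientation G \<sigma> \<longleftrightarrow>
     (\<forall>g\<in>carrier G. \<sigma> g \<in> {1, -1}) \<and>
     (\<forall>g\<in>carrier G. \<forall>h\<in>carrier G. \<sigma> (g \<otimes>\<^bsub>G\<^esub> h) = \<sigma> g * \<sigma> h)"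

definition group_alg :: "('g, 'b) monoid_scheme \<Rightarrow> ('g \<Rightarrow> 'f::field) set" where
  "group_alg G = {\<alpha>. finite {x. \<alpha> x \<noteq> 0} \<and> {x. \<alpha> x \<noteq> 0} \<subseteq> carrier G}"

definition ga_mult :: "('g, 'b) monoid_scheme \<Rightarrow> ('g \<Rightarrow> 'f::field) \<Rightarrow> ('g \<Rightarrow> 'f) \<Rightarrow> ('g \<Rightarrow> 'f)" where
  "ga_mult G \<alpha> \<beta> = (\<lambda>x. if x \<in> carrier G
       then (\<Sum>g\<in>{y \<in> carrier G. \<alpha> y \<noteq> 0}. \<alpha> g * \<beta> (inv\<^bsub>G\<^esub> g \<otimes>\<^bsub>G\<^esub> x))
       else 0)"

text \<open>Oriented involution: (\<Sum> a_g g)^\<circledast> = \<Sum> a_g \<sigma>(g) g^*, i.e. the coefficient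
  at x is \<sigma>(x^*) a_{x^*}.\<close>
definition oriented_inv :: "('g, 'b) monoid_scheme \<Rightarrow> ('g \<Rightarrow> 'g) \<Rightarrow> ('g \<Rightarrow> int) \<Rightarrow> ('g \<Rightarrow> 'f::field) \<Rightarrow> ('g \<Rightarrow> 'f)" where
  "oriented_inv G s \<sigma> \<alpha> = (\<lambda>x. if x \<in> carrier G then of_int (\<sigma> (s x)) * \<alpha> (s x) else 0)"

definition ga_normal :: "('g, 'b) monoid_scheme \<Rightarrow> ('g \<Rightarrow> 'g) \<Rightarrow> ('g \<Rightarrow> int) \<Rightarrow> ('f::field) itself \<Rightarrow> bool" where
  "ga_normal G s \<sigma> _ \<longleftrightarrow>
     (\<forall>\<alpha> \<in> (group_alg G :: ('g \<Rightarrow> 'f) set).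
        ga_mult G \<alpha> (oriented_inv G s \<sigma> \<alpha>) = ga_mult G (oriented_inv G s \<sigma> \<alpha>) \<alpha>)"

end

theory Submission
  imports Defs
begin

lemma ga_mult_two:
  fixes G (structure) and c1 c2 d1 d2 :: "'f::field"
  assumes G: "group G" and in_c: "a \<in> carrier G" "b \<in> carrier G" "c \<in> carrier G" "d \<in> carrier G" "x \<in> carrier G"
  shows "ga_mult G (\<lambda>y. c1 * (if y = a then 1 else 0) + c2 * (if y = b then 1 else 0))
                   (\<lambda>y. d1 * (if y = c then 1 else 0) + d2 * (if y = d then 1 else 0)) x
       = c1*d1*(if x = a \<otimes>\<^bsub>G\<^esub> c then 1 else 0) + c1*d2*(if x = a \<otimes>\<^bsub>G\<^esub> d then 1 else 0)
       + c2*d1*(if x = b \<otimes>\<^bsub>G\<^esub> c then 1 else 0) + c2*d2*(if x = b \<otimes>\<^bsub>G\<^esub> d then 1 else 0)"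
proof -
  interpret group G by (rule G)
  define \<alpha> where "\<alpha> = (\<lambda>y. c1 * (if y = a then 1 else 0) + c2 * (if y = b then (1::'f) else 0))"
  define \<beta> where "\<beta> = (\<lambda>y. d1 * (if y = c then 1 else 0) + d2 * (if y = d then (1::'f) else 0))"
  have S: "{y \<in> carrier G. \<alpha> y \<noteq> 0} \<subseteq> {a,b}" unfolding \<alpha>_def by auto
  have "ga_mult G \<alpha> \<beta> x = (\<Sum>y\<in>{y \<in> carrier G. \<alpha> y \<noteq> 0}. \<alpha> y * \<beta> (inv y \<otimes> x))"
    unfolding ga_mult_def using in_c by simp
  also have "\<dots> = (\<Sum>y\<in>{a,b}. \<alpha> y * \<beta> (inv y \<otimes> x))"
    by (rule sum.mono_neutral_left) (use S in_c in auto)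
  also have "\<dots> = c1 * \<beta> (inv a \<otimes> x) + c2 * \<beta> (inv b \<otimes> x)"
  proof (cases "a = b")
    case True
    then show ?thesis unfolding \<alpha>_def by (simp add: algebra_simps)
  next
    case False
    then show ?thesis unfolding \<alpha>_def by (simp add: algebra_simps)
  qed
  also have "\<dots> = c1*d1*(if x = a \<otimes> c then 1 else 0) + c1*d2*(if x = a \<otimes> d then 1 else 0)
       + c2*d1*(if x = b \<otimes> c then 1 else 0) + c2*d2*(if x = b \<otimes> d then 1 else 0)"
  proof -
    have e: "\<And>u v. u \<in> carrier G \<Longrightarrow> v \<in> carrier G \<Longrightarrow> (inv u \<otimes> x = v) = (x = u \<otimes> v)"
      using in_c by (metis inv_closed m_assoc r_inv l_inv l_one)
    have e1: "(inv a \<otimes> x = c) = (x = a \<otimes> c)" "(inv a \<otimes> x = d) = (x = a \<otimes> d)"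
      "(inv b \<otimes> x = c) = (x = b \<otimes> c)" "(inv b \<otimes> x = d) = (x = b \<otimes> d)"
      using e in_c by auto
    show ?thesis unfolding \<beta>_def e1 by (simp only: distrib_left mult.assoc add.assoc)
  qed
  finally show ?thesis unfolding \<alpha>_def \<beta>_def .
qed

lemma oi_two:
  fixes c1 c2 :: "'f::field"
  assumes inv: "group_involution G s" and ab: "a \<in> carrier G" "b \<in> carrier G"
  shows "oriented_inv G s \<sigma> (\<lambda>y. c1 * (if y = a then 1 else 0) + c2 * (if y = b then 1 else 0))
     = (\<lambda>y. (c1 * of_int (\<sigma> a)) * (if y = s a then 1 else 0) + (c2 * of_int (\<sigma> b)) * (if y = s b then 1 else 0))"
proof
  fix x
  have sc: "s a \<in> carrier G" "s b \<in> carrier G" using inv ab unfolding group_involution_def by auto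
  have e: "\<And>u. u \<in> carrier G \<Longrightarrow> x \<in> carrier G \<Longrightarrow> (s x = u) = (x = s u)"
    using inv unfolding group_involution_def by metis
  show "oriented_inv G s \<sigma> (\<lambda>y. c1 * (if y = a then 1 else 0) + c2 * (if y = b then 1 else 0)) x
     = (c1 * of_int (\<sigma> a)) * (if x = s a then 1 else 0) + (c2 * of_int (\<sigma> b)) * (if x = s b then 1 else 0)"
  proof (cases "x \<in> carrier G")
    case True
    then show ?thesis unfolding oriented_inv_def using e[OF ab(1) True] e[OF ab(2) True]
      by (auto simp: algebra_simps)
  next
    case False
    then show ?thesis unfolding oriented_inv_def using sc by auto
  qed
qed

lemma in_ga:
  fixes c1 c2 :: "'f::field"
  assumes "a \<in> carrier G" "b \<in> carrier G"
  shows "(\<lambda>y. c1 * (if y = a then 1 else 0) + c2 * (if y = b then 1 else 0)) \<in> group_alg G"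
proof -
  have "{x. c1 * (if x = a then 1 else 0) + c2 * (if x = b then 1 else 0) \<noteq> (0::'f)} \<subseteq> {a,b}" by auto
  moreover have "finite {a,b}" by simp
  ultimately have "finite {x. c1 * (if x = a then 1 else 0) + c2 * (if x = b then 1 else 0) \<noteq> (0::'f)}"
    by (rule finite_subset)
  moreover have "{a,b} \<subseteq> carrier G" using assms by simp
  ultimately show ?thesis unfolding group_alg_def
    using \<open>{x. c1 * (if x = a then 1 else 0) + c2 * (if x = b then 1 else 0) \<noteq> (0::'f)} \<subseteq> {a,b}\<close>
    by blast
qed

lemma normal_two:
  fixes c1 c2 :: "'f::field"
  assumes G: "group G" and inv: "group_involution G s" and N: "ga_normal G s \<sigma> TYPE('f)"
    and ab: "a \<in> carrier G" "b \<in> carrier G" and x: "x \<in> carrier G"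
  shows "c1*(c1 * of_int (\<sigma> a))*(if x = a \<otimes>\<^bsub>G\<^esub> s a then 1 else 0) + c1*(c2 * of_int (\<sigma> b))*(if x = a \<otimes>\<^bsub>G\<^esub> s b then 1 else 0)
       + c2*(c1 * of_int (\<sigma> a))*(if x = b \<otimes>\<^bsub>G\<^esub> s a then 1 else 0) + c2*(c2 * of_int (\<sigma> b))*(if x = b \<otimes>\<^bsub>G\<^esub> s b then 1 else 0)
   = (c1 * of_int (\<sigma> a))*c1*(if x = s a \<otimes>\<^bsub>G\<^esub> a then 1 else 0) + (c1 * of_int (\<sigma> a))*c2*(if x = s a \<otimes>\<^bsub>G\<^esub> b then 1 else 0)
       + (c2 * of_int (\<sigma> b))*c1*(if x = s b \<otimes>\<^bsub>G\<^esub> a then 1 else 0) + (c2 * of_int (\<sigma> b))*c2*(if x = s b \<otimes>\<^bsub>G\<^esub> b then 1 else 0)"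
proof -
  have sc: "s a \<in> carrier G" "s b \<in> carrier G" using inv ab unfolding group_involution_def by auto
  define \<alpha> where "\<alpha> = (\<lambda>y. c1 * (if y = a then 1 else 0) + c2 * (if y = b then (1::'f) else 0))"
  have "\<alpha> \<in> group_alg G" unfolding \<alpha>_def by (rule in_ga[OF ab])
  then have "ga_mult G \<alpha> (oriented_inv G s \<sigma> \<alpha>) = ga_mult G (oriented_inv G s \<sigma> \<alpha>) \<alpha>"
    using N unfolding ga_normal_def by blast
  then have "ga_mult G \<alpha> (oriented_inv G s \<sigma> \<alpha>) x = ga_mult G (oriented_inv G s \<sigma> \<alpha>) \<alpha> x" by simp
  then show ?thesis unfolding \<alpha>_def oi_two[OF inv ab]
    ga_mult_two[OF G ab sc x] ga_mult_two[OF G sc ab x] .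
qed

theorem lemma6:
  fixes G :: "('g, 'b) monoid_scheme" and s :: "'g \<Rightarrow> 'g" and \<sigma> :: "'g \<Rightarrow> int"
    and g h :: 'g
  assumes "infinite (UNIV :: 'f::field set)"
    and "(2::'f) \<noteq> 0"
    and "group G"
    and "group_involution G s"
    and "orientation G \<sigma>"
    and "\<exists>x\<in>carrier G. \<sigma> x \<noteq> 1"
    and "\<forall>x\<in>carrier G. \<sigma> (x \<otimes>\<^bsub>G\<^esub> s x) = 1"
    and "ga_normal G s \<sigma> TYPE('f)"
    and "g \<in> carrier G" and "h \<in> carrier G"
  shows "(\<sigma> g * \<sigma> h = 1 \<longrightarrow>
            g \<otimes>\<^bsub>G\<^esub> h = h \<otimes>\<^bsub>G\<^esub> g \<or> g \<otimes>\<^bsub>G\<^esub> h = s g \<otimes>\<^bsub>G\<^esub> s h)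
       \<and> (\<sigma> g * \<sigma> h = -1 \<longrightarrow>
            g \<otimes>\<^bsub>G\<^esub> h = h \<otimes>\<^bsub>G\<^esub> g \<or> g \<otimes>\<^bsub>G\<^esub> h = s (g \<otimes>\<^bsub>G\<^esub> h))"
proof -
  note G = assms(3) and inv = assms(4) and N = assms(8) and gh = assms(9,10)
  interpret group G by (rule G)
  have sc: "\<And>x. x \<in> carrier G \<Longrightarrow> s x \<in> carrier G" and ss: "\<And>x. x \<in> carrier G \<Longrightarrow> s (s x) = x"
    and sm: "\<And>x y. x \<in> carrier G \<Longrightarrow> y \<in> carrier G \<Longrightarrow> s (x \<otimes>\<^bsub>G\<^esub> y) = s y \<otimes>\<^bsub>G\<^esub> s x"
    using inv unfolding group_involution_def by auto
  have spm: "\<And>x. x \<in> carrier G \<Longrightarrow> \<sigma> x = 1 \<or> \<sigma> x = -1" using assms(5) unfolding orientation_def by auto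
  have ssig: "\<And>x. x \<in> carrier G \<Longrightarrow> \<sigma> (s x) = \<sigma> x"
  proof -
    fix x assume x: "x \<in> carrier G"
    have "\<sigma> x * \<sigma> (s x) = 1" using assms(5,7) x sc[OF x] unfolding orientation_def by metis
    then show "\<sigma> (s x) = \<sigma> x" using spm[OF x] spm[OF sc[OF x]] by auto
  qed
  have nz: "\<And>x. x \<in> carrier G \<Longrightarrow> (of_int (\<sigma> x) :: 'f) \<noteq> 0" using spm by fastforce
  have comm: "x \<otimes>\<^bsub>G\<^esub> s x = s x \<otimes>\<^bsub>G\<^esub> x" if x: "x \<in> carrier G" for x
  proof -
    have "(1::'f)*(1 * of_int (\<sigma> x))*(if x \<otimes>\<^bsub>G\<^esub> s x = x \<otimes>\<^bsub>G\<^esub> s x then 1 else 0) + 1*(0 * of_int (\<sigma> x))*(if x \<otimes>\<^bsub>G\<^esub> s x = x \<otimes>\<^bsub>G\<^esub> s x then 1 else 0)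
       + 0*(1 * of_int (\<sigma> x))*(if x \<otimes>\<^bsub>G\<^esub> s x = x \<otimes>\<^bsub>G\<^esub> s x then 1 else 0) + 0*(0 * of_int (\<sigma> x))*(if x \<otimes>\<^bsub>G\<^esub> s x = x \<otimes>\<^bsub>G\<^esub> s x then 1 else 0)
   = (1 * of_int (\<sigma> x))*1*(if x \<otimes>\<^bsub>G\<^esub> s x = s x \<otimes>\<^bsub>G\<^esub> x then 1 else 0) + (1 * of_int (\<sigma> x))*0*(if x \<otimes>\<^bsub>G\<^esub> s x = s x \<otimes>\<^bsub>G\<^esub> x then 1 else 0)
       + (0 * of_int (\<sigma> x))*1*(if x \<otimes>\<^bsub>G\<^esub> s x = s x \<otimes>\<^bsub>G\<^esub> x then 1 else 0) + (0 * of_int (\<sigma> x))*0*(if x \<otimes>\<^bsub>G\<^esub> s x = s x \<otimes>\<^bsub>G\<^esub> x then 1 else 0)"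
      by (rule normal_two[OF G inv N x x m_closed[OF x sc[OF x]]])
    then show ?thesis using nz[OF x] by (auto split: if_splits)
  qed
  define k where "k = s h"
  have k: "k \<in> carrier G" "s k = h" "\<sigma> k = \<sigma> h" using gh sc ss ssig unfolding k_def by auto
  have E: "(1::'f)*(1 * of_int (\<sigma> g))*(if g \<otimes>\<^bsub>G\<^esub> h = g \<otimes>\<^bsub>G\<^esub> s g then 1 else 0) + 1*(1 * of_int (\<sigma> k))*(if g \<otimes>\<^bsub>G\<^esub> h = g \<otimes>\<^bsub>G\<^esub> s k then 1 else 0)
       + 1*(1 * of_int (\<sigma> g))*(if g \<otimes>\<^bsub>G\<^esub> h = k \<otimes>\<^bsub>G\<^esub> s g then 1 else 0) + 1*(1 * of_int (\<sigma> k))*(if g \<otimes>\<^bsub>G\<^esub> h = k \<otimes>\<^bsub>G\<^esub> s k then 1 else 0)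
   = (1 * of_int (\<sigma> g))*1*(if g \<otimes>\<^bsub>G\<^esub> h = s g \<otimes>\<^bsub>G\<^esub> g then 1 else 0) + (1 * of_int (\<sigma> g))*1*(if g \<otimes>\<^bsub>G\<^esub> h = s g \<otimes>\<^bsub>G\<^esub> k then 1 else 0)
       + (1 * of_int (\<sigma> k))*1*(if g \<otimes>\<^bsub>G\<^esub> h = s k \<otimes>\<^bsub>G\<^esub> g then 1 else 0) + (1 * of_int (\<sigma> k))*1*(if g \<otimes>\<^bsub>G\<^esub> h = s k \<otimes>\<^bsub>G\<^esub> k then 1 else 0)"
    by (rule normal_two[OF G inv N gh(1) k(1) m_closed[OF gh]])
  have E2: "of_int (\<sigma> h) + of_int (\<sigma> g) * (if g \<otimes>\<^bsub>G\<^esub> h = s (g \<otimes>\<^bsub>G\<^esub> h) then 1 else 0)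
     = of_int (\<sigma> g) * (if g \<otimes>\<^bsub>G\<^esub> h = s g \<otimes>\<^bsub>G\<^esub> s h then 1 else 0) + of_int (\<sigma> h) * (if g \<otimes>\<^bsub>G\<^esub> h = h \<otimes>\<^bsub>G\<^esub> g then (1::'f) else 0)"
  proof -
    have r1: "g \<otimes>\<^bsub>G\<^esub> s k = g \<otimes>\<^bsub>G\<^esub> h" using k by simp
    have r2: "k \<otimes>\<^bsub>G\<^esub> s g = s (g \<otimes>\<^bsub>G\<^esub> h)" using sm[OF gh] unfolding k_def by simp
    have r3: "s g \<otimes>\<^bsub>G\<^esub> g = g \<otimes>\<^bsub>G\<^esub> s g" using comm[OF gh(1)] by simp
    have r4: "s k \<otimes>\<^bsub>G\<^esub> k = k \<otimes>\<^bsub>G\<^esub> s k" using comm[OF k(1)] by simp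
    have r5: "s k \<otimes>\<^bsub>G\<^esub> g = h \<otimes>\<^bsub>G\<^esub> g" using k by simp
    have r6: "s g \<otimes>\<^bsub>G\<^esub> k = s g \<otimes>\<^bsub>G\<^esub> s h" unfolding k_def by simp
    have L: "\<And>a b c d e f :: 'f. a + b + c + d = a + e + f + d \<Longrightarrow> b + c = e + f"
      by (simp add: add.assoc)
    have E': "of_int (\<sigma> g) * (if g \<otimes>\<^bsub>G\<^esub> h = g \<otimes>\<^bsub>G\<^esub> s g then 1 else 0) + of_int (\<sigma> h)
       + of_int (\<sigma> g) * (if g \<otimes>\<^bsub>G\<^esub> h = s (g \<otimes>\<^bsub>G\<^esub> h) then 1 else 0)
       + of_int (\<sigma> h) * (if g \<otimes>\<^bsub>G\<^esub> h = k \<otimes>\<^bsub>G\<^esub> s k then 1 else 0)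
     = of_int (\<sigma> g) * (if g \<otimes>\<^bsub>G\<^esub> h = g \<otimes>\<^bsub>G\<^esub> s g then 1 else 0)
       + of_int (\<sigma> g) * (if g \<otimes>\<^bsub>G\<^esub> h = s g \<otimes>\<^bsub>G\<^esub> s h then 1 else 0)
       + of_int (\<sigma> h) * (if g \<otimes>\<^bsub>G\<^esub> h = h \<otimes>\<^bsub>G\<^esub> g then (1::'f) else 0)
       + of_int (\<sigma> h) * (if g \<otimes>\<^bsub>G\<^esub> h = k \<otimes>\<^bsub>G\<^esub> s k then 1 else 0)"
      using E unfolding r1 r2 r3 r4 r5 r6 k(3) mult_1_left mult_1_right simp_thms(6) if_True .
    show ?thesis by (rule L[OF E'])
  qed
  define u where "u = (of_int (\<sigma> h) :: 'f)"
  have u0: "u \<noteq> 0" using nz[OF gh(2)] unfolding u_def .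
  have u2: "u + u \<noteq> 0"
  proof
    assume "u + u = 0"
    then have "2 * u = 0" by (simp add: algebra_simps)
    then show False using u0 assms(2) by simp
  qed
  show ?thesis
  proof (intro conjI impI)
    assume "\<sigma> g * \<sigma> h = 1"
    then have "\<sigma> g = \<sigma> h" using spm gh by fastforce
    then have E3: "u + u * (if g \<otimes>\<^bsub>G\<^esub> h = s (g \<otimes>\<^bsub>G\<^esub> h) then 1 else 0)
       = u * (if g \<otimes>\<^bsub>G\<^esub> h = s g \<otimes>\<^bsub>G\<^esub> s h then 1 else 0) + u * (if g \<otimes>\<^bsub>G\<^esub> h = h \<otimes>\<^bsub>G\<^esub> g then 1 else 0)"
      using E2 unfolding u_def by simp
    show "g \<otimes>\<^bsub>G\<^esub> h = h \<otimes>\<^bsub>G\<^esub> g \<or> g \<otimes>\<^bsub>G\<^esub> h = s g \<otimes>\<^bsub>G\<^esub> s h"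
    proof (rule ccontr)
      assume "\<not> ?thesis"
      with E3 have "u + u * (if g \<otimes>\<^bsub>G\<^esub> h = s (g \<otimes>\<^bsub>G\<^esub> h) then 1 else 0) = 0" by simp
      then show False using u0 u2 by (cases "g \<otimes>\<^bsub>G\<^esub> h = s (g \<otimes>\<^bsub>G\<^esub> h)") simp_all
    qed
  next
    assume "\<sigma> g * \<sigma> h = -1"
    then have "\<sigma> g = - \<sigma> h" using spm gh by fastforce
    then have E3: "u - u * (if g \<otimes>\<^bsub>G\<^esub> h = s (g \<otimes>\<^bsub>G\<^esub> h) then 1 else 0)
       = - u * (if g \<otimes>\<^bsub>G\<^esub> h = s g \<otimes>\<^bsub>G\<^esub> s h then 1 else 0) + u * (if g \<otimes>\<^bsub>G\<^esub> h = h \<otimes>\<^bsub>G\<^esub> g then 1 else 0)"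
      using E2 unfolding u_def by simp
    show "g \<otimes>\<^bsub>G\<^esub> h = h \<otimes>\<^bsub>G\<^esub> g \<or> g \<otimes>\<^bsub>G\<^esub> h = s (g \<otimes>\<^bsub>G\<^esub> h)"
    proof (rule ccontr)
      assume "\<not> ?thesis"
      with E3 have "u = - u * (if g \<otimes>\<^bsub>G\<^esub> h = s g \<otimes>\<^bsub>G\<^esub> s h then 1 else 0)" by simp
      then show False using u0 u2 by (cases "g \<otimes>\<^bsub>G\<^esub> h = s g \<otimes>\<^bsub>G\<^esub> s h") (simp_all add: algebra_simps)
    qed
  qed
qed

end
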